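(* Let $q$ be an odd prime power. For $1\leq i\leq k$, let $b_i\in\mathbb{F}_q$ and let $l_i,s_i$ be positive integers with $l_i$ odd; let $\delta\in\mathbb{F}_{q^2}$. Let $\varepsilon$ be a primitive element of $\mathbb{F}_{q^2}$ and $t=(q+1)/2$. Then the polynomial $$P(x)=-x+\sum_{i=1}^k b_i\varepsilon^{tl_i}\left((x^q+x+\delta)^{s_i}+(x^q+x+\delta)^{qs_i}\right)$$ permutes $\mathbb{F}_{q^2}$, and its compositional inverse over $\mathbb{F}_{q^2}$ is $$P^{-1}(x)=-x+\sum_{i=1}^k b_i\varepsilon^{tl_i}\left((-x^q-x+\delta)^{s_i}+(-x^q-x+\delta)^{qs_i}\right).$$
   Context: The compositional inverse of a permutation polynomial $f$ of $\mathbb{F}_{Q}$ is the unique polynomial $f^{-1}$ (modulo $x^Q-x$) with $f(f^{-1}(c))=f^{-1}(f(c))=c$ for all $c\in\mathbb{F}_Q$. *)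

theory Defs
  imports "HOL-Number_Theory.Number_Theory"
begin

definition primitive_element :: "'a::{field,finite} \<Rightarrow> bool" where
  "primitive_element e \<longleftrightarrow> e \<noteq> 0 \<and> (\<forall>x. x \<noteq> 0 \<longrightarrow> (\<exists>n::nat. x = e ^ n))"

end

theory Submission
  imports Defs "HOL-Computational_Algebra.Primes"
begin

lemma field_power_card_same:
  fixes x :: "'a :: {field,finite}"
  shows "x ^ card (UNIV :: 'a set) = x"
proof (cases "x = 0")
  case False
  have "x * (\<Prod>y\<in>UNIV-{0}. x * y) = x * x ^ (card (UNIV :: 'a set) - 1) * \<Prod>(UNIV-{0})"
    by (simp add: prod.distrib mult_ac)
  also have "x * x ^ (card (UNIV :: 'a set) - 1) = x ^ Suc (card (UNIV :: 'a set) - 1)"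
    by (subst power_Suc) auto
  also have "Suc (card (UNIV :: 'a set) - 1) = card (UNIV :: 'a set)"
    using finite_UNIV_card_ge_0[where ?'a = 'a] by simp
  also have "(\<Prod>y\<in>UNIV-{0}. x * y) = (\<Prod>y\<in>UNIV-{0}. y)"
    by (rule prod.reindex_bij_witness[of _ "\<lambda>y. y / x" "\<lambda>y. x * y"]) (use False in auto)
  finally show ?thesis
    by simp
qed (use finite_UNIV_card_ge_0[where ?'a = 'a] in auto)

lemma frob_setup:
  fixes q :: nat
  assumes "primepow q" and "card (UNIV :: 'a::{field,finite} set) = q ^ 2"
  shows "\<exists>n. prime CHAR('a) \<and> q = CHAR('a) ^ n"
proof -
  obtain p k where pk: "0 < k" "prime p" "q = p ^ k"
    using assms(1) unfolding primepow_def by auto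
  have cp: "prime CHAR('a)"
    by (rule prime_CHAR_semidom) (simp add: finite_imp_CHAR_pos)
  have "CHAR('a) dvd card (UNIV :: 'a set)"
    by (rule CHAR_dvd_CARD)
  hence "CHAR('a) dvd p ^ (k * 2)" using assms(2) pk by (simp add: power_mult)
  hence "CHAR('a) dvd p" using cp prime_dvd_power by blast
  hence "CHAR('a) = p" using cp pk(2) primes_dvd_imp_eq by blast
  thus ?thesis using pk cp by blast
qed

theorem theorem3p8:
  fixes q k :: nat and b :: "nat \<Rightarrow> 'a::{field,finite}" and l s :: "nat \<Rightarrow> nat"
    and \<delta> \<epsilon> :: 'a and t :: nat and P Pinv :: "'a \<Rightarrow> 'a"
  assumes "primepow q" and "odd q" and "card (UNIV :: 'a set) = q ^ 2"
    and "\<forall>i\<in>{1..k}. b i ^ q = b i"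
    and "\<forall>i\<in>{1..k}. l i > 0 \<and> odd (l i) \<and> s i > 0"
    and "primitive_element \<epsilon>"
  defines "t \<equiv> (q + 1) div 2"
    and "P \<equiv> \<lambda>x. - x + (\<Sum>i=1..k. b i * \<epsilon> ^ (t * l i) *
            ((x ^ q + x + \<delta>) ^ s i + (x ^ q + x + \<delta>) ^ (q * s i)))"
    and "Pinv \<equiv> \<lambda>x. - x + (\<Sum>i=1..k. b i * \<epsilon> ^ (t * l i) *
            ((- (x ^ q) - x + \<delta>) ^ s i + (- (x ^ q) - x + \<delta>) ^ (q * s i)))"
  shows "bij P \<and> (\<forall>x. P (Pinv x) = x \<and> Pinv (P x) = x)"
proof -
  obtain n where n: "prime CHAR('a)" "q = CHAR('a) ^ n"
    using frob_setup[OF assms(1) assms(3)] by blast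
  have fadd: "(x + y) ^ q = x ^ q + y ^ q" for x y :: 'a
    using freshmans_dream'[OF n] by blast
  have fsum: "(\<Sum>i\<in>A. f i) ^ q = (\<Sum>i\<in>A. f i ^ q)" for A and f :: "nat \<Rightarrow> 'a"
    using freshmans_dream_sum'[OF n] by blast
  have fneg: "(- x) ^ q = - (x ^ q)" for x :: 'a
    using assms(2) by (simp add: power_minus_odd)
  have fqq: "x ^ (q * q) = x" for x :: 'a
    using field_power_card_same[of x] assms(3) by (simp add: power2_eq_square)
  have qpos: "q > 0" using assms(2) by (cases q) auto
  define N where "N = (q * q - 1) div 2"
  have tq: "t * (q - 1) = N"
  proof -
    obtain r where r: "q = 2 * r + 1" using assms(2) oddE by blast
    show ?thesis unfolding t_def N_def r by (simp add: algebra_simps)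
  qed
  have eN: "\<epsilon> ^ N = -1"
  proof -
    have sq: "(\<epsilon> ^ N) ^ 2 = 1"
    proof -
      have "2 * N = q * q - 1" unfolding N_def using assms(2) by (cases q) auto
      hence e2: "Suc (N * 2) = q * q" using qpos by (simp add: mult.commute)
      have "(\<epsilon> ^ N) ^ 2 * \<epsilon> = \<epsilon> ^ Suc (N * 2)"
        by (simp only: power_mult power_Suc2)
      hence "(\<epsilon> ^ N) ^ 2 * \<epsilon> = \<epsilon> ^ (q * q)" by (simp only: e2)
      hence "(\<epsilon> ^ N) ^ 2 * \<epsilon> = 1 * \<epsilon>" using fqq by simp
      moreover have "\<epsilon> \<noteq> 0" using assms(6) unfolding primitive_element_def by simp
      ultimately show ?thesis by simp
    qed
    have ne1: "\<epsilon> ^ N \<noteq> 1"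
    proof
      assume e1: "\<epsilon> ^ N = 1"
      have q3: "q \<ge> 3" using assms(2) primepow_gt_Suc_0[OF assms(1)] by presburger
      hence "q * q \<ge> 9" using mult_le_mono[OF q3 q3] by simp
      hence Npos: "N > 0" unfolding N_def by simp
      have "UNIV - {0} \<subseteq> (\<lambda>m. \<epsilon> ^ m) ` {..<N}"
      proof
        fix x :: 'a assume "x \<in> UNIV - {0}"
        then obtain m where "x = \<epsilon> ^ m" using assms(6) unfolding primitive_element_def by auto
        also have "\<epsilon> ^ m = \<epsilon> ^ (m mod N)"
        proof -
          have "\<epsilon> ^ m = \<epsilon> ^ (N * (m div N) + m mod N)" by simp
          also have "\<dots> = \<epsilon> ^ (m mod N)" by (simp only: power_add power_mult e1 power_one mult_1)
          finally show ?thesis .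
        qed
        finally show "x \<in> (\<lambda>m. \<epsilon> ^ m) ` {..<N}" using Npos by auto
      qed
      hence "card (UNIV - {0::'a}) \<le> card ((\<lambda>m. \<epsilon> ^ m) ` {..<N})"
        by (intro card_mono) auto
      also have "\<dots> \<le> N" using card_image_le[of "{..<N}"] by auto
      finally have "q * q - 1 \<le> N" using assms(3) by (simp add: power2_eq_square)
      moreover have "2 * N \<le> q * q - 1" unfolding N_def by simp
      ultimately show False using Npos by linarith
    qed
    from sq have "(\<epsilon> ^ N - 1) * (\<epsilon> ^ N + 1) = 0" by (simp add: algebra_simps power2_eq_square)
    thus ?thesis using ne1 by (simp add: eq_neg_iff_add_eq_0)
  qed
  define c where "c i = b i * \<epsilon> ^ (t * l i)" for i
  have cq: "c i ^ q = - c i" if "i \<in> {1..k}" for i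
  proof -
    have ol: "odd (l i)" using assms(5) that by auto
    have "(\<epsilon> ^ (t * l i)) ^ q = \<epsilon> ^ (t * l i) * (\<epsilon> ^ N) ^ l i"
    proof -
      have "t * l i * q = t * l i + N * l i" using tq qpos
        by (cases q) (auto simp: algebra_simps)
      thus ?thesis by (simp only: power_mult[symmetric] power_add[symmetric])
    qed
    thus ?thesis unfolding c_def using assms(4) that ol
      by (simp add: power_mult_distrib eN power_minus_odd)
  qed
  define T where "T x = x ^ q + x" for x :: 'a
  define G where "G u = (\<Sum>i=1..k. c i * ((u + \<delta>) ^ s i + (u + \<delta>) ^ (q * s i)))" for u
  have Gq: "G u ^ q = - G u" for u
  proof -
    have "G u ^ q = (\<Sum>i=1..k. (c i * ((u + \<delta>) ^ s i + (u + \<delta>) ^ (q * s i))) ^ q)"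
      unfolding G_def by (rule fsum)
    also have "\<dots> = (\<Sum>i=1..k. - (c i * ((u + \<delta>) ^ s i + (u + \<delta>) ^ (q * s i))))"
    proof (rule sum.cong[OF refl])
      fix i assume i: "i \<in> {1..k}"
      have a: "((u + \<delta>) ^ s i) ^ q = (u + \<delta>) ^ (q * s i)"
        by (simp only: power_mult[symmetric] mult.commute)
      have b': "((u + \<delta>) ^ (q * s i)) ^ q = (u + \<delta>) ^ s i"
      proof -
        have "((u + \<delta>) ^ (q * s i)) ^ q = ((u + \<delta>) ^ (q * q)) ^ s i"
          by (simp only: power_mult[symmetric] mult_ac)
        thus ?thesis using fqq by simp
      qed
      show "(c i * ((u + \<delta>) ^ s i + (u + \<delta>) ^ (q * s i))) ^ q =
            - (c i * ((u + \<delta>) ^ s i + (u + \<delta>) ^ (q * s i)))"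
        by (simp only: power_mult_distrib fadd a b' cq[OF i]) (simp add: algebra_simps)
    qed
    also have "\<dots> = - G u" unfolding G_def by (simp add: sum_negf)
    finally show ?thesis .
  qed
  have TG: "T (G u) = 0" for u unfolding T_def Gq by simp
  have Tlin: "T (- x + w) = - T x + T w" for x w
    unfolding T_def by (simp only: fadd fneg) (simp add: algebra_simps)
  have Pe: "P x = - x + G (T x)" for x
    unfolding P_def G_def T_def c_def by (simp add: mult.assoc)
  have Pie: "Pinv x = - x + G (- T x)" for x
    unfolding Pinv_def G_def T_def c_def by (simp add: mult.assoc)
  have TP: "T (P x) = - T x" for x using Pe Tlin TG by simp
  have TPi: "T (Pinv x) = - T x" for x using Pie Tlin TG by simp
  have inv1: "P (Pinv x) = x" for x using Pe Pie TPi by simp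
  have inv2: "Pinv (P x) = x" for x using Pe Pie TP by simp
  have "bij P" by (rule o_bij[of Pinv]) (auto simp: fun_eq_iff inv1 inv2)
  thus ?thesis using inv1 inv2 by blast
qed

end
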